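(* Let $f_1,f_2:\mathbb{R}\to\mathbb{R}$ be bounded measurable $1$-periodic functions, $a_1,a_2>0$, $c=(c_1,c_2)\in\mathbb{R}^2$, $\varepsilon>0$, and let $u^\varepsilon(t;c)=(u_1^\varepsilon,u_2^\varepsilon)$ be the unique solution of \[\dot u^\varepsilon_1=-\tfrac{a_1}{\varepsilon}(u^\varepsilon_1-u^\varepsilon_2)+f_1(t/\varepsilon),\quad \dot u^\varepsilon_2=-\tfrac{a_2}{\varepsilon}(u^\varepsilon_2-u^\varepsilon_1)+f_2(t/\varepsilon),\quad t>0,\quad u_i^\varepsilon(0)=c_i.\] Then for all $t>0$ and $i\in\{1,2\}$, \[|u^\varepsilon_i(t;c)-m_i(t)|\leq \bigg(\frac{2a_2(a_1+a_2)+a_i}{(a_1+a_2)^2}\|f_1\|_\infty+\frac{2a_1(a_1+a_2)+a_i}{(a_1+a_2)^2}\|f_2\|_\infty\bigg)\varepsilon,\] where, for $\{i,j\}=\{1,2\}$, \[m_i(t)=\frac{c_1a_2+c_2a_1}{a_1+a_2}+\frac{a_2\bar f_1+a_1\bar f_2}{a_1+a_2}t+\frac{a_i(c_i-c_j)}{a_1+a_2}e^{-\frac{(a_1+a_2)t}{\varepsilon}},\qquad \bar f_k=\int_0^1 f_k(s)\,ds.\] *)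

theory Defs
  imports "HOL-Analysis.Analysis" "HOL-Probability.Essential_Supremum"
begin

definition Linf_norm :: "(real \<Rightarrow> real) \<Rightarrow> real" where
  "Linf_norm f = real_of_ereal (esssup lebesgue (\<lambda>x. ereal \<bar>f x\<bar>))"

end

theory Submission
  imports Defs
begin
lemma alg1:
  fixes a1 a2 c1 c2 \<delta> F1 F2 u1 u2 I1 I2 t E :: real
  assumes "a1 + a2 > 0" "u1 = c1 - a1*\<delta> + F1" "u2 = c2 + a2*\<delta> + F2"
  shows "u1 - ((c1*a2 + c2*a1)/(a1+a2) + (a2*I1 + a1*I2)/(a1+a2)*t + a1*(c1-c2)/(a1+a2)*E)
     = (a2*(F1 - t*I1) + a1*(F2 - t*I2) + a1*((u1-u2) - (c1-c2)*E))/(a1+a2)"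
proof -
  have ne: "a1 + a2 \<noteq> 0" using assms by simp
  have "u1 - ((c1*a2 + c2*a1)/(a1+a2) + (a2*I1 + a1*I2)/(a1+a2)*t + a1*(c1-c2)/(a1+a2)*E)
     = (u1*(a1+a2) - (c1*a2 + c2*a1) - (a2*I1 + a1*I2)*t - a1*(c1-c2)*E)/(a1+a2)"
    using ne by (simp add: diff_divide_distrib add_divide_distrib) (simp add: distrib_right add_divide_distrib)
  also have "u1*(a1+a2) - (c1*a2 + c2*a1) - (a2*I1 + a1*I2)*t - a1*(c1-c2)*E
     = a2*(F1 - t*I1) + a1*(F2 - t*I2) + a1*((u1-u2) - (c1-c2)*E)"
    unfolding assms(2,3) by (simp add: algebra_simps)
  finally show ?thesis .
qed
lemma alg2:
  fixes a1 a2 c1 c2 \<delta> F1 F2 u1 u2 I1 I2 t E :: real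
  assumes "a1 + a2 > 0" "u1 = c1 - a1*\<delta> + F1" "u2 = c2 + a2*\<delta> + F2"
  shows "u2 - ((c1*a2 + c2*a1)/(a1+a2) + (a2*I1 + a1*I2)/(a1+a2)*t + a2*(c2-c1)/(a1+a2)*E)
     = (a2*(F1 - t*I1) + a1*(F2 - t*I2) - a2*((u1-u2) - (c1-c2)*E))/(a1+a2)"
proof -
  have ne: "a1 + a2 \<noteq> 0" using assms by simp
  have "u2 - ((c1*a2 + c2*a1)/(a1+a2) + (a2*I1 + a1*I2)/(a1+a2)*t + a2*(c2-c1)/(a1+a2)*E)
     = (u2*(a1+a2) - (c1*a2 + c2*a1) - (a2*I1 + a1*I2)*t - a2*(c2-c1)*E)/(a1+a2)"
    using ne by (simp add: diff_divide_distrib add_divide_distrib) (simp add: distrib_right add_divide_distrib)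
  also have "u2*(a1+a2) - (c1*a2 + c2*a1) - (a2*I1 + a1*I2)*t - a2*(c2-c1)*E
     = a2*(F1 - t*I1) + a1*(F2 - t*I2) - a2*((u1-u2) - (c1-c2)*E)"
    unfolding assms(2,3) by (simp add: algebra_simps)
  finally show ?thesis .
qed
lemma alg3:
  fixes a1 a2 \<epsilon> L1 L2 A b :: real
  assumes "A = a1 + a2" "A > 0"
  shows "((2 * a2 * (a1 + a2) + b) / (a1 + a2)^2 * L1 + (2 * a1 * (a1 + a2) + b) / (a1 + a2)^2 * L2) * \<epsilon>
        = (a2 * (2 * \<epsilon> * L1) + a1 * (2 * \<epsilon> * L2) + b * ((L1 + L2) * \<epsilon> / A)) / A"
  using assms(2) unfolding assms(1)[symmetric] by (simp add: field_simps power2_eq_square)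

lemma Linf_props:
  fixes f :: "real \<Rightarrow> real"
  assumes meas: "f \<in> borel_measurable lebesgue" and bdd: "bounded (range f)"
  shows "0 \<le> Linf_norm f" "AE x in lebesgue. \<bar>f x\<bar> \<le> Linf_norm f"
proof -
  obtain B where B: "\<And>x. \<bar>f x\<bar> \<le> B" using bdd unfolding bounded_iff by auto
  have m: "(\<lambda>x. ereal \<bar>f x\<bar>) \<in> borel_measurable lebesgue" using meas by measurable
  have le: "esssup lebesgue (\<lambda>x. ereal \<bar>f x\<bar>) \<le> ereal B"
    by (rule esssup_I[OF m]) (auto intro: B)
  have "esssup lebesgue (\<lambda>x::real. ereal 0) \<le> esssup lebesgue (\<lambda>x. ereal \<bar>f x\<bar>)"
    using esssup_mono[of "\<lambda>x. ereal 0" lebesgue "\<lambda>x. ereal \<bar>f x\<bar>"] by auto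
  moreover have "esssup lebesgue (\<lambda>x::real. ereal 0) = 0"
    by (subst esssup_const) (auto simp: emeasure_lborel_UNIV)
  ultimately have ge: "0 \<le> esssup lebesgue (\<lambda>x. ereal \<bar>f x\<bar>)" by simp
  then obtain L where L: "esssup lebesgue (\<lambda>x. ereal \<bar>f x\<bar>) = ereal L" "0 \<le> L"
    using le by (cases "esssup lebesgue (\<lambda>x. ereal \<bar>f x\<bar>)") auto
  show "0 \<le> Linf_norm f" using L by (simp add: Linf_norm_def)
  show "AE x in lebesgue. \<bar>f x\<bar> \<le> Linf_norm f"
    using esssup_AE[of "\<lambda>x. ereal \<bar>f x\<bar>" lebesgue] L by (simp add: Linf_norm_def)
qed

lemma bdd_integrable:
  fixes f :: "real \<Rightarrow> real"
  assumes meas: "f \<in> borel_measurable lebesgue" and bdd: "bounded (range f)"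
  shows "f integrable_on {a..b}"
proof -
  obtain B where B: "\<And>x. \<bar>f x\<bar> \<le> B" using bdd unfolding bounded_iff by auto
  show ?thesis
    by (rule measurable_bounded_by_integrable_imp_integrable_real[where g="\<lambda>_. B"])
       (auto intro: B measurable_restrict_space1 meas)
qed

lemma int_bound:
  fixes f :: "real \<Rightarrow> real"
  assumes int: "f integrable_on {a..b}" and ab: "a \<le> b" and L: "0 \<le> L"
    and ae: "AE x in lebesgue. \<bar>f x\<bar> \<le> L"
  shows "\<bar>integral {a..b} f\<bar> \<le> L * (b - a)"
proof -
  obtain N where N: "\<And>x. x \<in> space lebesgue - N \<Longrightarrow> \<bar>f x\<bar> \<le> L" "N \<in> null_sets lebesgue"
    using AE_E3[OF ae] by blast
  have negN: "negligible N" using N(2) negligible_iff_null_sets by blast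
  define g where "g x = (if x \<in> N then 0 else f x)" for x
  have eq: "integral {a..b} f = integral {a..b} g"
    by (rule integral_spike[OF negN]) (auto simp: g_def)
  have gi: "g integrable_on {a..b}"
    using integrable_spike[OF int negN, of g] by (auto simp: g_def)
  have gb: "\<And>x. \<bar>g x\<bar> \<le> L" using N(1) L by (auto simp: g_def)
  have "norm (integral {a..b} g) \<le> L * measure lborel (cbox a b)"
    by (rule has_integral_bound[OF L]) (use gi gb in \<open>auto simp: cbox_interval\<close>)
  then show ?thesis using ab eq by simp
qed

lemma scale_int:
  fixes f :: "real \<Rightarrow> real"
  assumes eps: "\<epsilon> > 0" and int: "f integrable_on {a/\<epsilon>..b/\<epsilon>}"
  shows "((\<lambda>s. f (s/\<epsilon>)) has_integral \<epsilon> * integral {a/\<epsilon>..b/\<epsilon>} f) {a..b}"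
proof -
  have "(f has_integral integral {a/\<epsilon>..b/\<epsilon>} f) (cbox (a/\<epsilon>) (b/\<epsilon>))"
    using int by (simp add: cbox_interval has_integral_integral)
  from has_integral_affinity'[OF this, of "1/\<epsilon>" 0] eps
  show ?thesis by (simp add: cbox_interval field_simps)
qed


lemma per_nat:
  fixes f :: "real \<Rightarrow> real"
  assumes per: "\<And>x. f (x + 1) = f x"
  shows "f (x + real n) = f x"
proof (induction n)
  case 0 then show ?case by simp
next
  case (Suc n)
  have "f (x + real (Suc n)) = f ((x + real n) + 1)" by (simp add: algebra_simps)
  also have "\<dots> = f (x + real n)" by (rule per)
  finally show ?case using Suc by simp
qed

lemma per_int_nat:
  fixes f :: "real \<Rightarrow> real"
  assumes per: "\<And>x. f (x + 1) = f x" and int: "\<And>a b. f integrable_on {a..b}"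
  shows "integral {0..real n} f = real n * integral {0..1} f"
proof (induction n)
  case 0 then show ?case by simp
next
  case (Suc n)
  have "integral {0..real (Suc n)} f = integral {0..real n} f + integral {real n..real (Suc n)} f"
    using Henstock_Kurzweil_Integration.integral_combine[where a=0 and c="real n" and b="real (Suc n)" and f=f] int by auto
  moreover have "integral {real n..real (Suc n)} f = integral {0..1} f"
  proof -
    have "integral {0..1} (f \<circ> (+) (real n)) = integral {0 + real n..1 + real n} f"
      by (rule integral_shift_Icc_real)
    moreover have "f \<circ> (+) (real n) = f"
      using per_nat[where f=f, OF per] by (auto simp: fun_eq_iff add.commute)
    ultimately show ?thesis by (simp add: add.commute)
  qed
  ultimately show ?case using Suc by (simp add: algebra_simps)
qed

lemma per_bound:
  fixes f :: "real \<Rightarrow> real"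
  assumes per: "\<And>x. f (x + 1) = f x" and int: "\<And>a b. f integrable_on {a..b}"
    and L: "0 \<le> L" and ae: "AE x in lebesgue. \<bar>f x\<bar> \<le> L" and T: "0 \<le> T"
  shows "\<bar>integral {0..T} f - T * integral {0..1} f\<bar> \<le> 2 * L"
proof -
  define n where "n = nat \<lfloor>T\<rfloor>"
  have n1: "real n \<le> T" "T < real n + 1" using T unfolding n_def by linarith+
  have n0: "0 \<le> real n" by simp
  have "integral {0..T} f = integral {0..real n} f + integral {real n..T} f"
    using Henstock_Kurzweil_Integration.integral_combine[where a=0 and c="real n" and b=T and f=f] n1 n0 int by auto
  also have "\<dots> = real n * integral {0..1} f + integral {real n..T} f"
    using per_int_nat[OF per int] by simp
  finally have eq: "integral {0..T} f - T * integral {0..1} f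
      = integral {real n..T} f - (T - real n) * integral {0..1} f" by (simp add: algebra_simps)
  have b1: "\<bar>integral {real n..T} f\<bar> \<le> L * (T - real n)"
    by (rule int_bound[OF int n1(1) L ae])
  have b2: "\<bar>integral {0..1} f\<bar> \<le> L * (1 - 0)"
    by (rule int_bound[OF int _ L ae]) simp
  have "\<bar>(T - real n) * integral {0..1} f\<bar> \<le> 1 * L"
    unfolding abs_mult using b2 n1 by (intro mult_mono) auto
  moreover have "L * (T - real n) \<le> L * 1" using n1 L by (intro mult_left_mono) auto
  ultimately show ?thesis using eq b1 by linarith
qed

lemma compare:
  fixes e G :: "real \<Rightarrow> real"
  assumes k: "k > 0" and M: "M \<ge> 0" and cont: "continuous_on {0..} e"
    and eq: "\<And>t. t \<ge> 0 \<Longrightarrow> e t = - k * integral {0..t} e + G t"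
    and G0: "G 0 = 0"
    and Glip: "\<And>s t. 0 \<le> s \<Longrightarrow> s \<le> t \<Longrightarrow> G t - G s \<le> M * (t - s)"
    and t1: "t1 \<ge> 0"
  shows "e t1 \<le> M / k"
proof (rule ccontr)
  assume "\<not> e t1 \<le> M / k"
  then have big: "e t1 > M / k" by simp
  define S where "S = {s \<in> {0..t1}. e s \<le> M / k}"
  have c1: "continuous_on {0..t1} e" using cont by (rule continuous_on_subset) auto
  have e0: "e 0 = 0" using eq[of 0] G0 by simp
  have "0 \<in> S" using e0 M k t1 unfolding S_def by auto
  hence Sne: "S \<noteq> {}" by auto
  have Sbdd: "bdd_above S" unfolding S_def by (auto intro: bdd_aboveI[where M=t1])
  have Scl: "closed S" unfolding S_def
    by (rule continuous_on_closed_Collect_le[OF c1]) auto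
  define t0 where "t0 = Sup S"
  have t0S: "t0 \<in> S" unfolding t0_def by (rule closed_contains_Sup[OF Sne Sbdd Scl])
  hence t0: "0 \<le> t0" "t0 \<le> t1" "e t0 \<le> M / k" unfolding S_def by auto
  have c2: "continuous_on {t0..t1} e" by (rule continuous_on_subset[OF cont]) (use t0 in auto)
  obtain s where s: "t0 \<le> s" "s \<le> t1" "e s = M / k"
    using IVT'[of e t0 "M/k" t1, OF t0(3) _ t0(2) c2] big by auto
  have "s \<in> S" using s t0 unfolding S_def by auto
  hence "s \<le> t0" unfolding t0_def by (rule cSup_upper[OF _ Sbdd])
  hence et0: "e t0 = M / k" using s by simp
  have ge: "e x \<ge> M / k" if "x \<in> {t0..t1}" for x
  proof (rule ccontr)
    assume "\<not> e x \<ge> M / k"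
    hence "x \<in> S" using that t0 unfolding S_def by auto
    hence "x \<le> t0" unfolding t0_def by (rule cSup_upper[OF _ Sbdd])
    hence "x = t0" using that by auto
    thus False using et0 \<open>\<not> e x \<ge> M / k\<close> by simp
  qed
  have int01: "e integrable_on {0..t1}" by (rule integrable_continuous_interval[OF c1])
  have comb: "integral {0..t1} e = integral {0..t0} e + integral {t0..t1} e"
    using Henstock_Kurzweil_Integration.integral_combine[where a=0 and c=t0 and b=t1 and f=e] t0 int01 by auto
  have "integral {t0..t1} (\<lambda>_. M / k) \<le> integral {t0..t1} e"
    by (rule integral_le) (use ge integrable_continuous_interval[OF c2] in auto)
  hence intge: "(M / k) * (t1 - t0) \<le> integral {t0..t1} e" using t0 by (simp add: mult.commute)
  have "e t1 - e t0 = - k * integral {t0..t1} e + (G t1 - G t0)"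
    using eq[of t1] eq[of t0] t0 comb by (simp add: algebra_simps)
  also have "\<dots> \<le> - k * ((M / k) * (t1 - t0)) + M * (t1 - t0)"
    using intge Glip[OF t0(1) t0(2)] k by (intro add_mono) (auto simp: pos_divide_le_eq mult.commute)
  also have "\<dots> = 0" using k by simp
  finally show False using big et0 by simp
qed


lemma exp_int:
  fixes k t :: real
  assumes k: "k > 0" and t: "t \<ge> 0"
  shows "integral {0..t} (\<lambda>s. exp (- k * s)) = (1 - exp (- k * t)) / k"
proof -
  have "((\<lambda>s. exp (- k * s)) has_integral ((\<lambda>s. - exp (- k * s) / k) t - (\<lambda>s. - exp (- k * s) / k) 0)) {0..t}"
  proof (rule fundamental_theorem_of_calculus[OF t])
    fix x :: real assume "x \<in> {0..t}"
    have "((\<lambda>s. - exp (- k * s) / k) has_real_derivative (- (exp (- k * x) * (- k)) / k)) (at x within {0..t})"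
      by (auto intro!: derivative_eq_intros)
    then show "((\<lambda>s. - exp (- k * s) / k) has_vector_derivative exp (- k * x)) (at x within {0..t})"
      using k by (simp add: has_real_derivative_iff_has_vector_derivative)
  qed
  then show ?thesis using k by (simp add: integral_unique diff_divide_distrib)
qed

theorem theorem1p6:
  fixes f1 f2 :: "real \<Rightarrow> real" and a1 a2 c1 c2 \<epsilon> :: real
    and u1 u2 :: "real \<Rightarrow> real"
  assumes f1_meas: "f1 \<in> borel_measurable lebesgue"
      and f2_meas: "f2 \<in> borel_measurable lebesgue"
      and f1_bdd: "bounded (range f1)" and f2_bdd: "bounded (range f2)"
      and f1_per: "\<And>x. f1 (x + 1) = f1 x" and f2_per: "\<And>x. f2 (x + 1) = f2 x"
      and a1: "a1 > 0" and a2: "a2 > 0" and eps: "\<epsilon> > 0"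
      and u1_cont: "continuous_on {0..} u1" and u2_cont: "continuous_on {0..} u2"
      and u1_sol: "\<And>t. t \<ge> 0 \<Longrightarrow> u1 t = c1 + integral {0..t}
                 (\<lambda>s. - (a1 / \<epsilon>) * (u1 s - u2 s) + f1 (s / \<epsilon>))"
      and u2_sol: "\<And>t. t \<ge> 0 \<Longrightarrow> u2 t = c2 + integral {0..t}
                 (\<lambda>s. - (a2 / \<epsilon>) * (u2 s - u1 s) + f2 (s / \<epsilon>))"
  shows "\<forall>t>0.
     \<bar>u1 t - ((c1 * a2 + c2 * a1) / (a1 + a2)
              + (a2 * integral {0..1} f1 + a1 * integral {0..1} f2) / (a1 + a2) * t
              + a1 * (c1 - c2) / (a1 + a2) * exp (- ((a1 + a2) * t / \<epsilon>)))\<bar>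
       \<le> ((2 * a2 * (a1 + a2) + a1) / (a1 + a2)^2 * Linf_norm f1
           + (2 * a1 * (a1 + a2) + a1) / (a1 + a2)^2 * Linf_norm f2) * \<epsilon>
   \<and> \<bar>u2 t - ((c1 * a2 + c2 * a1) / (a1 + a2)
              + (a2 * integral {0..1} f1 + a1 * integral {0..1} f2) / (a1 + a2) * t
              + a2 * (c2 - c1) / (a1 + a2) * exp (- ((a1 + a2) * t / \<epsilon>)))\<bar>
       \<le> ((2 * a2 * (a1 + a2) + a2) / (a1 + a2)^2 * Linf_norm f1
           + (2 * a1 * (a1 + a2) + a2) / (a1 + a2)^2 * Linf_norm f2) * \<epsilon>"
proof (intro allI impI)
  fix t :: real assume tpos: "t > 0"
  define A where "A = a1 + a2"
  have A: "A > 0" using a1 a2 by (simp add: A_def)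
  define k where "k = A / \<epsilon>"
  have k: "k > 0" using A eps by (simp add: k_def)
  define L1 where "L1 = Linf_norm f1"
  define L2 where "L2 = Linf_norm f2"
  have L1: "0 \<le> L1" "AE x in lebesgue. \<bar>f1 x\<bar> \<le> L1" using Linf_props[OF f1_meas f1_bdd] by (auto simp: L1_def)
  have L2: "0 \<le> L2" "AE x in lebesgue. \<bar>f2 x\<bar> \<le> L2" using Linf_props[OF f2_meas f2_bdd] by (auto simp: L2_def)
  have f1i: "\<And>a b. f1 integrable_on {a..b}" by (rule bdd_integrable[OF f1_meas f1_bdd])
  have f2i: "\<And>a b. f2 integrable_on {a..b}" by (rule bdd_integrable[OF f2_meas f2_bdd])
  define F1 where "F1 x = \<epsilon> * integral {0..x/\<epsilon>} f1" for x
  define F2 where "F2 x = \<epsilon> * integral {0..x/\<epsilon>} f2" for x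
  have F1h: "((\<lambda>s. f1 (s/\<epsilon>)) has_integral F1 x) {0..x}" for x
    using scale_int[OF eps, of f1 0 x] f1i by (simp add: F1_def)
  have F2h: "((\<lambda>s. f2 (s/\<epsilon>)) has_integral F2 x) {0..x}" for x
    using scale_int[OF eps, of f2 0 x] f2i by (simp add: F2_def)
  define D where "D x = integral {0..x} (\<lambda>s. u1 s - u2 s)" for x
  have dcont: "continuous_on {0..} (\<lambda>s. u1 s - u2 s)"
    using u1_cont u2_cont by (intro continuous_intros)
  have di: "(\<lambda>s. u1 s - u2 s) integrable_on {0..x}" for x
    by (rule integrable_continuous_interval, rule continuous_on_subset[OF dcont]) auto
  have u1e: "u1 x = c1 - (a1/\<epsilon>) * D x + F1 x" if "x \<ge> 0" for x
  proof -
    have "((\<lambda>s. - (a1 / \<epsilon>) * (u1 s - u2 s) + f1 (s / \<epsilon>)) has_integral (- (a1/\<epsilon>) * D x + F1 x)) {0..x}"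
      unfolding D_def by (intro has_integral_add has_integral_mult_right F1h integrable_integral di)
    then show ?thesis using u1_sol[OF that] by (simp add: integral_unique)
  qed
  have u2e: "u2 x = c2 + (a2/\<epsilon>) * D x + F2 x" if "x \<ge> 0" for x
  proof -
    have "((\<lambda>s. - (a2 / \<epsilon>) * (u2 s - u1 s) + f2 (s / \<epsilon>)) has_integral ((a2/\<epsilon>) * D x + F2 x)) {0..x}"
    proof -
      have "((\<lambda>s. (a2 / \<epsilon>) * (u1 s - u2 s) + f2 (s / \<epsilon>)) has_integral ((a2/\<epsilon>) * D x + F2 x)) {0..x}"
        unfolding D_def by (intro has_integral_add has_integral_mult_right F2h integrable_integral di)
      then show ?thesis by (simp add: algebra_simps)
    qed
    then show ?thesis using u2_sol[OF that] by (simp add: integral_unique)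
  qed
  define e where "e x = (u1 x - u2 x) - (c1 - c2) * exp (- k * x)" for x
  have econt: "continuous_on {0..} e"
    unfolding e_def using u1_cont u2_cont by (intro continuous_intros)
  define G where "G x = F1 x - F2 x" for x
  have eeq: "e x = - k * integral {0..x} e + G x" if x: "x \<ge> 0" for x
  proof -
    have "(e has_integral (D x - (c1 - c2) * ((1 - exp (- k * x)) / k))) {0..x}"
    proof -
      have "((\<lambda>s. exp (- k * s)) has_integral ((1 - exp (- k * x)) / k)) {0..x}"
      proof -
        have "continuous_on {0..x} (\<lambda>s. exp (- k * s))" by (intro continuous_intros)
        hence "(\<lambda>s. exp (- k * s)) integrable_on {0..x}" by (rule integrable_continuous_interval)
        from integrable_integral[OF this] show ?thesis unfolding exp_int[OF k x] .
      qed
      then show ?thesis unfolding e_def[abs_def] D_def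
        by (intro has_integral_diff has_integral_mult_right integrable_integral di)
    qed
    then have ie: "integral {0..x} e = D x - (c1 - c2) * ((1 - exp (- k * x)) / k)"
      by (rule integral_unique)
    have pr: "- k * (D x - (c1 - c2) * ((1 - exp (- k * x)) / k)) = - (k * D x) + ((c1 - c2) - (c1 - c2) * exp (- k * x))"
      using k by (simp add: field_simps)
    have ks: "(a1/\<epsilon>) * D x + (a2/\<epsilon>) * D x = k * D x"
      by (simp add: k_def A_def add_divide_distrib distrib_right)
    show ?thesis unfolding ie pr using u1e[OF x] u2e[OF x] ks
      unfolding e_def G_def by linarith
  qed
  have G0: "G 0 = 0" by (simp add: G_def F1_def F2_def)
  have Gdiff: "\<bar>G y - G x\<bar> \<le> (L1 + L2) * (y - x)" if "0 \<le> x" "x \<le> y" for x y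
  proof -
    have xy: "x/\<epsilon> \<le> y/\<epsilon>" "0 \<le> x/\<epsilon>" using that eps by (auto simp: divide_right_mono)
    have fi: "(\<lambda>z. f1 z - f2 z) integrable_on {a..b}" for a b using f1i f2i by (rule integrable_diff)
    have c: "integral {0..y/\<epsilon>} g = integral {0..x/\<epsilon>} g + integral {x/\<epsilon>..y/\<epsilon>} g"
      if "\<And>a b. g integrable_on {a..b}" for g :: "real \<Rightarrow> real"
      using Henstock_Kurzweil_Integration.integral_combine[where a=0 and c="x/\<epsilon>" and b="y/\<epsilon>" and f=g] xy that by auto
    have "G y - G x = \<epsilon> * integral {x/\<epsilon>..y/\<epsilon>} (\<lambda>z. f1 z - f2 z)"
      unfolding G_def F1_def F2_def using c[OF f1i] c[OF f2i]
      by (simp add: integral_diff[OF f1i f2i] algebra_simps)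
    moreover have "\<bar>integral {x/\<epsilon>..y/\<epsilon>} (\<lambda>z. f1 z - f2 z)\<bar> \<le> (L1 + L2) * (y/\<epsilon> - x/\<epsilon>)"
      by (rule int_bound[OF fi xy(1)]) (use L1 L2 in \<open>auto\<close>)
    ultimately have "\<bar>G y - G x\<bar> \<le> \<epsilon> * ((L1 + L2) * (y/\<epsilon> - x/\<epsilon>))"
      using eps by (simp add: abs_mult mult_left_mono)
    also have "\<dots> = (L1 + L2) * (y - x)" using eps by (simp add: field_simps)
    finally show ?thesis .
  qed
  have M: "0 \<le> L1 + L2" using L1 L2 by simp
  have eub: "e t \<le> (L1 + L2) / k"
    by (rule compare[OF k M econt eeq G0 _ ]) (use Gdiff tpos in \<open>auto simp: abs_le_iff\<close>)
  have elb: "- e t \<le> (L1 + L2) / k"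
  proof (rule compare[where e="\<lambda>x. - e x" and G="\<lambda>x. - G x", OF k M])
    show "continuous_on {0..} (\<lambda>x. - e x)" using econt by (intro continuous_intros)
    show "- e x = - k * integral {0..x} (\<lambda>x. - e x) + - G x" if "0 \<le> x" for x
      using eeq[OF that] by simp
  qed (use G0 Gdiff tpos in \<open>auto simp: abs_le_iff\<close>)
  have eb: "\<bar>e t\<bar> \<le> (L1 + L2) * \<epsilon> / A" using eub elb eps A by (simp add: k_def abs_le_iff)
  have Pb: "\<bar>F x - t * integral {0..1} f\<bar> \<le> 2 * \<epsilon> * L"
    if Fd: "F = (\<lambda>x. \<epsilon> * integral {0..x/\<epsilon>} f)" and per: "\<And>x. f (x + 1) = f x"
      and fi: "\<And>a b. f integrable_on {a..b}" and L: "0 \<le> L" "AE x in lebesgue. \<bar>f x\<bar> \<le> L"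
      and xt: "x = t"
    for F f L x
  proof -
    have "\<bar>integral {0..t/\<epsilon>} f - (t/\<epsilon>) * integral {0..1} f\<bar> \<le> 2 * L"
      by (rule per_bound[OF per fi L]) (use tpos eps in auto)
    hence "\<epsilon> * \<bar>integral {0..t/\<epsilon>} f - (t/\<epsilon>) * integral {0..1} f\<bar> \<le> \<epsilon> * (2 * L)"
      using eps by (simp add: mult_left_mono)
    moreover have "\<epsilon> * \<bar>integral {0..t/\<epsilon>} f - (t/\<epsilon>) * integral {0..1} f\<bar> = \<bar>F x - t * integral {0..1} f\<bar>"
    proof -
      have "\<epsilon> * (integral {0..t/\<epsilon>} f - (t/\<epsilon>) * integral {0..1} f) = F x - t * integral {0..1} f"
        using eps unfolding Fd xt by (simp add: right_diff_distrib)
      moreover have "\<epsilon> * \<bar>integral {0..t/\<epsilon>} f - (t/\<epsilon>) * integral {0..1} f\<bar>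
          = \<bar>\<epsilon> * (integral {0..t/\<epsilon>} f - (t/\<epsilon>) * integral {0..1} f)\<bar>"
        using eps by (simp add: abs_mult)
      ultimately show ?thesis by simp
    qed
    ultimately show ?thesis by simp
  qed
  have P1: "\<bar>F1 t - t * integral {0..1} f1\<bar> \<le> 2 * \<epsilon> * L1"
    by (rule Pb[OF _ f1_per f1i L1]) (auto simp: F1_def[abs_def])
  have P2: "\<bar>F2 t - t * integral {0..1} f2\<bar> \<le> 2 * \<epsilon> * L2"
    by (rule Pb[OF _ f2_per f2i L2]) (auto simp: F2_def[abs_def])
  define P where "P = a2 * (F1 t - t * integral {0..1} f1) + a1 * (F2 t - t * integral {0..1} f2)"
  have Pb2: "\<bar>P\<bar> \<le> a2 * (2 * \<epsilon> * L1) + a1 * (2 * \<epsilon> * L2)"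
  proof -
    have "\<bar>P\<bar> \<le> a2 * \<bar>F1 t - t * integral {0..1} f1\<bar> + a1 * \<bar>F2 t - t * integral {0..1} f2\<bar>"
      unfolding P_def using a1 a2 abs_triangle_ineq[of "a2 * (F1 t - t * integral {0..1} f1)" "a1 * (F2 t - t * integral {0..1} f2)"]
      by (simp add: abs_mult)
    also have "\<dots> \<le> a2 * (2 * \<epsilon> * L1) + a1 * (2 * \<epsilon> * L2)"
      using a1 a2 P1 P2 by (intro add_mono mult_left_mono) auto
    finally show ?thesis .
  qed
  have t0: "t \<ge> 0" using tpos by simp
  have expk: "exp (- ((a1 + a2) * t / \<epsilon>)) = exp (- k * t)" by (simp add: k_def A_def)
  have id1: "u1 t - ((c1 * a2 + c2 * a1) / (a1 + a2)
              + (a2 * integral {0..1} f1 + a1 * integral {0..1} f2) / (a1 + a2) * t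
              + a1 * (c1 - c2) / (a1 + a2) * exp (- ((a1 + a2) * t / \<epsilon>))) = (P + a1 * e t) / A"
    unfolding P_def e_def expk A_def
    by (rule alg1[where \<delta>="D t / \<epsilon>"]) (use A u1e[OF t0] u2e[OF t0] in \<open>auto simp: A_def\<close>)
  have id2: "u2 t - ((c1 * a2 + c2 * a1) / (a1 + a2)
              + (a2 * integral {0..1} f1 + a1 * integral {0..1} f2) / (a1 + a2) * t
              + a2 * (c2 - c1) / (a1 + a2) * exp (- ((a1 + a2) * t / \<epsilon>))) = (P - a2 * e t) / A"
    unfolding P_def e_def expk A_def
    by (rule alg2[where \<delta>="D t / \<epsilon>"]) (use A u1e[OF t0] u2e[OF t0] in \<open>auto simp: A_def\<close>)
  have ae1: "\<bar>a1 * e t\<bar> \<le> a1 * ((L1 + L2) * \<epsilon> / A)" using mult_left_mono[OF eb, of a1] a1 by (simp add: abs_mult)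
  have ae2: "\<bar>a2 * e t\<bar> \<le> a2 * ((L1 + L2) * \<epsilon> / A)" using mult_left_mono[OF eb, of a2] a2 by (simp add: abs_mult)
  have r1: "((2 * a2 * (a1 + a2) + a1) / (a1 + a2)^2 * Linf_norm f1
           + (2 * a1 * (a1 + a2) + a1) / (a1 + a2)^2 * Linf_norm f2) * \<epsilon>
        = (a2 * (2 * \<epsilon> * L1) + a1 * (2 * \<epsilon> * L2) + a1 * ((L1 + L2) * \<epsilon> / A)) / A"
    unfolding L1_def L2_def by (rule alg3[OF A_def A])
  have r2: "((2 * a2 * (a1 + a2) + a2) / (a1 + a2)^2 * Linf_norm f1
           + (2 * a1 * (a1 + a2) + a2) / (a1 + a2)^2 * Linf_norm f2) * \<epsilon>
        = (a2 * (2 * \<epsilon> * L1) + a1 * (2 * \<epsilon> * L2) + a2 * ((L1 + L2) * \<epsilon> / A)) / A"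
    unfolding L1_def L2_def by (rule alg3[OF A_def A])
  have "\<bar>(P + a1 * e t) / A\<bar> \<le> (a2 * (2 * \<epsilon> * L1) + a1 * (2 * \<epsilon> * L2) + a1 * ((L1 + L2) * \<epsilon> / A)) / A"
  proof -
    have "\<bar>P + a1 * e t\<bar> \<le> a2 * (2 * \<epsilon> * L1) + a1 * (2 * \<epsilon> * L2) + a1 * ((L1 + L2) * \<epsilon> / A)"
      using abs_triangle_ineq[of P "a1 * e t"] Pb2 ae1 by linarith
    then show ?thesis unfolding abs_divide abs_of_pos[OF A] by (rule divide_right_mono) (use A in simp)
  qed
  moreover have "\<bar>(P - a2 * e t) / A\<bar> \<le> (a2 * (2 * \<epsilon> * L1) + a1 * (2 * \<epsilon> * L2) + a2 * ((L1 + L2) * \<epsilon> / A)) / A"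
  proof -
    have "\<bar>P - a2 * e t\<bar> \<le> a2 * (2 * \<epsilon> * L1) + a1 * (2 * \<epsilon> * L2) + a2 * ((L1 + L2) * \<epsilon> / A)"
      using abs_triangle_ineq4[of P "a2 * e t"] Pb2 ae2 by linarith
    then show ?thesis unfolding abs_divide abs_of_pos[OF A] by (rule divide_right_mono) (use A in simp)
  qed
  ultimately show "\<bar>u1 t - ((c1 * a2 + c2 * a1) / (a1 + a2)
              + (a2 * integral {0..1} f1 + a1 * integral {0..1} f2) / (a1 + a2) * t
              + a1 * (c1 - c2) / (a1 + a2) * exp (- ((a1 + a2) * t / \<epsilon>)))\<bar>
       \<le> ((2 * a2 * (a1 + a2) + a1) / (a1 + a2)^2 * Linf_norm f1
           + (2 * a1 * (a1 + a2) + a1) / (a1 + a2)^2 * Linf_norm f2) * \<epsilon>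
   \<and> \<bar>u2 t - ((c1 * a2 + c2 * a1) / (a1 + a2)
              + (a2 * integral {0..1} f1 + a1 * integral {0..1} f2) / (a1 + a2) * t
              + a2 * (c2 - c1) / (a1 + a2) * exp (- ((a1 + a2) * t / \<epsilon>)))\<bar>
       \<le> ((2 * a2 * (a1 + a2) + a2) / (a1 + a2)^2 * Linf_norm f1
           + (2 * a1 * (a1 + a2) + a2) / (a1 + a2)^2 * Linf_norm f2) * \<epsilon>"
    unfolding id1 id2 r1 r2 by simp
qed

end
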